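(* Let $f\in\mathbb{K}[S_M]$ and let $G$ be a set of nonzero polynomials in $\mathbb{K}[S_M]$. The multivariate division algorithm of $f$ by $G$ with respect to the sparse order $\prec$, using the divisibility relation $\mid_\delta$, terminates. Moreover, if $G$ is a sparse Gröbner basis of an ideal $I\subset\mathbb{K}[S_M]$ with respect to $\prec$ and $f\equiv f'\pmod I$, then the remainders of the division algorithm for $f$ and for $f'$ coincide, and this remainder is the same for any sparse Gröbner basis of $I$ with respect to $\prec$.
   Context: Let $\mathbb{K}$ be a field of characteristic $0$ and $M\subset\mathbb{R}^n$ a polytope with $0\in M$. Let $S_M\subset\mathbb{Z}^n$ be the affine semigroup generated by $M\cap\mathbb{Z}^n$ and $S_M^h\subset\mathbb{Z}^{n+1}$ the affine semigroup generated by $\{(s,1):s\in M\cap\mathbb{Z}^n\}$; both are assumed pointed (no nonzero invertible elements). For an affine semigroup $S$, $\mathbb{K}[S]$ is the semigroup algebra with $\mathbb{K}$-basis the monomials $X^s$, $s\in S$, and $X^sX^t=X^{s+t}$. $\mathbb{K}[S_M^h]$ is graded by $\deg X^{(s,d)}=d$. The dehomogenization $\chi:\mathbb{K}[S_M^h]\to\mathbb{K}[S_M]$ is the $\mathbb{K}$-algebra epimorphism $X^{(s,d)}\mapsto X^s$. The affine degree $\delta^A(X^s)$ of a monomial of $\mathbb{K}[S_M]$ is the least $d\in\mathbb{N}$ with $(s,d)\in S_M^h$; for $f=\sum c_sX^s\neq0$, $\delta^A(f)=\max\{\delta^A(X^s):c_s\neq0\}$. The homogenization of $f=\sum c_sX^s$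 is $\chi^{-1}(f)=\sum c_sX^{(s,\delta^A(f))}$. The sparse degree of $f\in\mathbb{K}[S_M^h]$ is $\delta(f):=\delta^A(\chi(f))$. Fix a monomial order $<_M$ on $\mathbb{K}[S_M]$. The sparse order $\prec$ on monomials of $\mathbb{K}[S_M]$: $X^s\prec X^r$ iff $\delta^A(X^s)<\delta^A(X^r)$, or $\delta^A(X^s)=\delta^A(X^r)$ and $X^s<_MX^r$. Divisibility: for monomials of $\mathbb{K}[S_M^h]$, $X^{(s,d_s)}\mid_\delta X^{(r,d_r)}$ if there is a monomial $X^{(t,d_t)}\in\mathbb{K}[S_M^h]$ with $X^{(s,d_s)}X^{(t,d_t)}=X^{(r,d_r)}$ and $\delta(X^{(s,d_s)})+\delta(X^{(t,d_t)})=\delta(X^{(r,d_r)})$; for monomials of $\mathbb{K}[S_M]$, $X^s\mid_\delta X^r$ iff $\chi^{-1}(X^s)\mid_\delta\chi^{-1}(X^r)$. A sparse Gröbner basis of an ideal $I\subset\mathbb{K}[S_M]$ w.r.t. $\prec$ is a subset of $I$ generating $I$ such that for every nonzero $f\in I$ some element $g$ of it satisfies $\mathrm{LM}_\prec(g)\mid_\delta\mathrm{LM}_\prec(f)$. The division algorithm of $f$ by $G$: set $p:=f$, $r:=0$; while $p\neq0$: if there is $g\in G$ with $\mathrm{LM}_\prec(g)\mid_\delta\mathrm{LM}_\prec(p)$, write $\mathrm{LM}_\prec(p)=X^t\,\mathrm{LM}_\prec(g)$ as in the definition of $\mid_\delta$ and replace $p$ by $p-\frac{\mathrm{LC}(p)}{\mathrm{LC}(g)}X^tg$;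 otherwise move the leading term of $p$ to $r$. The output is the remainder $r$. *)

theory Defs
  imports "HOL-Analysis.Analysis" "HOL-Library.Poly_Mapping" "HOL-Library.Product_Plus"
begin

(* Exponents live in Z^n, rendered as int^'n for a finite index type 'n.
   Elements of K[Z^n] are finitely supported maps int^'n \<Rightarrow>\<^sub>0 'k
   (X^s = Poly_Mapping.single s 1, product = convolution). *)

definition vec_of_int :: "int^'n \<Rightarrow> real^'n" where
  "vec_of_int s = (\<chi> i. real_of_int (s $ i))"

definition lattice_pts :: "(real^'n) set \<Rightarrow> (int^'n) set" where
  "lattice_pts M = {s. vec_of_int s \<in> M}"

inductive_set gen_semigroup :: "'a::comm_monoid_add set \<Rightarrow> 'a set" for A where
  gen_zero: "0 \<in> gen_semigroup A"
| gen_add: "s \<in> gen_semigroup A \<Longrightarrow> a \<in> A \<Longrightarrow> s + a \<in> gen_semigroup A"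

definition S_M :: "(real^'n) set \<Rightarrow> (int^'n) set" where
  "S_M M = gen_semigroup (lattice_pts M)"

definition S_Mh :: "(real^'n) set \<Rightarrow> ((int^'n) \<times> int) set" where
  "S_Mh M = gen_semigroup ((\<lambda>s. (s, 1)) ` lattice_pts M)"

definition pointed :: "'a::comm_monoid_add set \<Rightarrow> bool" where
  "pointed S \<longleftrightarrow> (\<forall>s\<in>S. \<forall>t\<in>S. s + t = 0 \<longrightarrow> s = 0)"

definition semialg :: "'a set \<Rightarrow> ('a \<Rightarrow>\<^sub>0 'k::zero) set" where
  "semialg S = {p. Poly_Mapping.keys p \<subseteq> S}"

definition aff_deg :: "(real^'n) set \<Rightarrow> int^'n \<Rightarrow> nat" where
  "aff_deg M s = (LEAST d. (s, int d) \<in> S_Mh M)"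

definition homog_mon :: "(real^'n) set \<Rightarrow> int^'n \<Rightarrow> (int^'n) \<times> int" where
  "homog_mon M s = (s, int (aff_deg M s))"

definition sparse_deg :: "(real^'n) set \<Rightarrow> (int^'n) \<times> int \<Rightarrow> nat" where
  "sparse_deg M sd = aff_deg M (fst sd)"

definition hdvd_delta :: "(real^'n) set \<Rightarrow> (int^'n) \<times> int \<Rightarrow> (int^'n) \<times> int \<Rightarrow> bool" where
  "hdvd_delta M a b \<longleftrightarrow> (\<exists>c \<in> S_Mh M. a + c = b \<and> sparse_deg M a + sparse_deg M c = sparse_deg M b)"

definition dvd_delta :: "(real^'n) set \<Rightarrow> int^'n \<Rightarrow> int^'n \<Rightarrow> bool" where
  "dvd_delta M s r \<longleftrightarrow> hdvd_delta M (homog_mon M s) (homog_mon M r)"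

definition monomial_order :: "'a::comm_monoid_add set \<Rightarrow> ('a \<Rightarrow> 'a \<Rightarrow> bool) \<Rightarrow> bool" where
  "monomial_order S lt \<longleftrightarrow>
     (\<forall>s\<in>S. \<not> lt s s) \<and>
     (\<forall>s\<in>S. \<forall>r\<in>S. \<forall>t\<in>S. lt s r \<longrightarrow> lt r t \<longrightarrow> lt s t) \<and>
     (\<forall>s\<in>S. \<forall>r\<in>S. s \<noteq> r \<longrightarrow> lt s r \<or> lt r s) \<and>
     (\<forall>s\<in>S. \<forall>r\<in>S. \<forall>t\<in>S. lt s r \<longrightarrow> lt (s + t) (r + t)) \<and>
     wf {(s, r). s \<in> S \<and> r \<in> S \<and> lt s r}"

definition sparse_less :: "(real^'n) set \<Rightarrow> (int^'n \<Rightarrow> int^'n \<Rightarrow> bool) \<Rightarrow> int^'n \<Rightarrow> int^'n \<Rightarrow> bool" where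
  "sparse_less M lt s r \<longleftrightarrow>
     aff_deg M s < aff_deg M r \<or> (aff_deg M s = aff_deg M r \<and> lt s r)"

definition LM :: "(real^'n) set \<Rightarrow> (int^'n \<Rightarrow> int^'n \<Rightarrow> bool) \<Rightarrow> (int^'n \<Rightarrow>\<^sub>0 'k::zero) \<Rightarrow> int^'n" where
  "LM M lt p = (THE s. s \<in> Poly_Mapping.keys p \<and> (\<forall>r\<in>Poly_Mapping.keys p. r \<noteq> s \<longrightarrow> sparse_less M lt r s))"

definition LC :: "(real^'n) set \<Rightarrow> (int^'n \<Rightarrow> int^'n \<Rightarrow> bool) \<Rightarrow> (int^'n \<Rightarrow>\<^sub>0 'k::zero) \<Rightarrow> 'k" where
  "LC M lt p = Poly_Mapping.lookup p (LM M lt p)"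

definition is_ideal :: "'a::comm_monoid_add set \<Rightarrow> ('a \<Rightarrow>\<^sub>0 'k::comm_ring_1) set \<Rightarrow> bool" where
  "is_ideal S I \<longleftrightarrow> I \<subseteq> semialg S \<and> 0 \<in> I \<and>
     (\<forall>p\<in>I. \<forall>q\<in>I. p + q \<in> I) \<and> (\<forall>p\<in>I. \<forall>h\<in>semialg S. h * p \<in> I)"

definition ideal_gen :: "'a::comm_monoid_add set \<Rightarrow> ('a \<Rightarrow>\<^sub>0 'k::comm_ring_1) set \<Rightarrow> ('a \<Rightarrow>\<^sub>0 'k) set" where
  "ideal_gen S G = \<Inter>{J. is_ideal S J \<and> G \<subseteq> J}"

definition sparse_GB :: "(real^'n) set \<Rightarrow> (int^'n \<Rightarrow> int^'n \<Rightarrow> bool) \<Rightarrow>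
    (int^'n \<Rightarrow>\<^sub>0 'k::comm_ring_1) set \<Rightarrow> (int^'n \<Rightarrow>\<^sub>0 'k) set \<Rightarrow> bool" where
  "sparse_GB M lt G I \<longleftrightarrow> G \<subseteq> I \<and> ideal_gen (S_M M) G = I \<and>
     (\<forall>f\<in>I. f \<noteq> 0 \<longrightarrow> (\<exists>g\<in>G. dvd_delta M (LM M lt g) (LM M lt f)))"

(* One step of the (nondeterministic) division algorithm on states (p, r).
   In a reduction step the quotient monomial X^t is the dehomogenization of the
   witness of |_delta, i.e. t = LM(p) - LM(g). *)
inductive div_step :: "(real^'n) set \<Rightarrow> (int^'n \<Rightarrow> int^'n \<Rightarrow> bool) \<Rightarrow> (int^'n \<Rightarrow>\<^sub>0 'k::field) set \<Rightarrow>
    (int^'n \<Rightarrow>\<^sub>0 'k) \<times> (int^'n \<Rightarrow>\<^sub>0 'k) \<Rightarrow> (int^'n \<Rightarrow>\<^sub>0 'k) \<times> (int^'n \<Rightarrow>\<^sub>0 'k) \<Rightarrow> bool"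
  for M lt G where
  reduce: "p \<noteq> 0 \<Longrightarrow> g \<in> G \<Longrightarrow> dvd_delta M (LM M lt g) (LM M lt p) \<Longrightarrow>
    div_step M lt G (p, r)
      (p - Poly_Mapping.single (LM M lt p - LM M lt g) (LC M lt p / LC M lt g) * g, r)"
| move: "p \<noteq> 0 \<Longrightarrow> \<not> (\<exists>g\<in>G. dvd_delta M (LM M lt g) (LM M lt p)) \<Longrightarrow>
    div_step M lt G (p, r)
      (p - Poly_Mapping.single (LM M lt p) (LC M lt p),
       r + Poly_Mapping.single (LM M lt p) (LC M lt p))"

definition div_remainder :: "(real^'n) set \<Rightarrow> (int^'n \<Rightarrow> int^'n \<Rightarrow> bool) \<Rightarrow> (int^'n \<Rightarrow>\<^sub>0 'k::field) set \<Rightarrow>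
    (int^'n \<Rightarrow>\<^sub>0 'k) \<Rightarrow> (int^'n \<Rightarrow>\<^sub>0 'k) \<Rightarrow> bool" where
  "div_remainder M lt G f r \<longleftrightarrow> (div_step M lt G)\<^sup>*\<^sup>* (f, 0) (0, r)"

end

theory Submission
  imports Defs
begin


lemma gen_semigroup_add:
  assumes "a \<in> gen_semigroup A" "b \<in> gen_semigroup A"
  shows "a + b \<in> gen_semigroup A"
  using assms(2)
proof (induction b rule: gen_semigroup.induct)
  case gen_zero then show ?case using assms(1) by simp
next
  case (gen_add s x) then show ?case by (metis add.assoc gen_semigroup.gen_add)
qed

lemma S_Mh_fst: "x \<in> S_Mh M \<Longrightarrow> fst x \<in> S_M M"
  unfolding S_Mh_def S_M_def
proof (induction x rule: gen_semigroup.induct)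
  case gen_zero then show ?case by (simp add: gen_semigroup.gen_zero)
next
  case (gen_add s a) then show ?case by (auto intro: gen_semigroup.gen_add)
qed

lemma S_Mh_ex: "s \<in> S_M M \<Longrightarrow> \<exists>d::nat. (s, int d) \<in> S_Mh M"
  unfolding S_Mh_def S_M_def
proof (induction s rule: gen_semigroup.induct)
  case gen_zero then show ?case
    by (rule exI[of _ 0]) (metis gen_semigroup.gen_zero of_nat_0 zero_prod_def)
next
  case (gen_add s a)
  then obtain d where d: "(s, int d) \<in> gen_semigroup ((\<lambda>s. (s, 1)) ` lattice_pts M)" by blast
  have "(s, int d) + (a, 1) \<in> gen_semigroup ((\<lambda>s. (s, 1::int)) ` lattice_pts M)"
    using d gen_add(2) by (intro gen_semigroup.gen_add) auto
  then show ?case by (intro exI[of _ "Suc d"]) (simp add: add.commute)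
qed

lemma aff_deg_in: "s \<in> S_M M \<Longrightarrow> (s, int (aff_deg M s)) \<in> S_Mh M"
  unfolding aff_deg_def using S_Mh_ex by (rule LeastI_ex)

lemma aff_deg_le: "(s, int d) \<in> S_Mh M \<Longrightarrow> aff_deg M s \<le> d"
  unfolding aff_deg_def by (rule Least_le)

lemma S_M_add: "s \<in> S_M M \<Longrightarrow> r \<in> S_M M \<Longrightarrow> s + r \<in> S_M M"
  unfolding S_M_def by (rule gen_semigroup_add)

lemma S_M_zero: "0 \<in> S_M M"
  unfolding S_M_def by (rule gen_semigroup.gen_zero)

lemma aff_deg_add:
  assumes "s \<in> S_M M" "r \<in> S_M M"
  shows "aff_deg M (s + r) \<le> aff_deg M s + aff_deg M r"
proof -
  have "(s, int (aff_deg M s)) + (r, int (aff_deg M r)) \<in> S_Mh M"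
    using aff_deg_in[OF assms(1)] aff_deg_in[OF assms(2)] unfolding S_Mh_def
    by (rule gen_semigroup_add)
  then have "(s + r, int (aff_deg M s + aff_deg M r)) \<in> S_Mh M" by simp
  then show ?thesis by (rule aff_deg_le)
qed

lemma dvd_delta_D:
  assumes "dvd_delta M a b"
  shows "b - a \<in> S_M M \<and> aff_deg M a + aff_deg M (b - a) = aff_deg M b"
proof -
  obtain c where c: "c \<in> S_Mh M" "homog_mon M a + c = homog_mon M b"
    "sparse_deg M (homog_mon M a) + sparse_deg M c = sparse_deg M (homog_mon M b)"
    using assms unfolding dvd_delta_def hdvd_delta_def by blast
  have "fst c = b - a" using c(2) unfolding homog_mon_def
    by (cases c) (auto simp: algebra_simps)
  then show ?thesis using c(1,3) S_Mh_fst[OF c(1)]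
    unfolding sparse_deg_def homog_mon_def by simp
qed

lemma mo_D:
  assumes "monomial_order S lt"
  shows "\<And>s. s \<in> S \<Longrightarrow> \<not> lt s s"
    and "\<And>s r t. s \<in> S \<Longrightarrow> r \<in> S \<Longrightarrow> t \<in> S \<Longrightarrow> lt s r \<Longrightarrow> lt r t \<Longrightarrow> lt s t"
    and "\<And>s r. s \<in> S \<Longrightarrow> r \<in> S \<Longrightarrow> s \<noteq> r \<Longrightarrow> lt s r \<or> lt r s"
    and "\<And>s r t. s \<in> S \<Longrightarrow> r \<in> S \<Longrightarrow> t \<in> S \<Longrightarrow> lt s r \<Longrightarrow> lt (s + t) (r + t)"
    and "wf {(s, r). s \<in> S \<and> r \<in> S \<and> lt s r}"
proof -
  note h = assms[unfolded monomial_order_def]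
  note h1 = h[THEN conjunct1] and h2 = h[THEN conjunct2, THEN conjunct1]
    and h3 = h[THEN conjunct2, THEN conjunct2, THEN conjunct1]
    and h4 = h[THEN conjunct2, THEN conjunct2, THEN conjunct2, THEN conjunct1]
    and h5 = h[THEN conjunct2, THEN conjunct2, THEN conjunct2, THEN conjunct2]
  show "\<And>s. s \<in> S \<Longrightarrow> \<not> lt s s" using h1 by (rule bspec)
  show "\<And>s r t. s \<in> S \<Longrightarrow> r \<in> S \<Longrightarrow> t \<in> S \<Longrightarrow> lt s r \<Longrightarrow> lt r t \<Longrightarrow> lt s t"
    using h2 by (elim ballE) (erule (1) mp[OF mp], blast+)
  show "\<And>s r. s \<in> S \<Longrightarrow> r \<in> S \<Longrightarrow> s \<noteq> r \<Longrightarrow> lt s r \<or> lt r s"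
    using h3 by blast
  show "\<And>s r t. s \<in> S \<Longrightarrow> r \<in> S \<Longrightarrow> t \<in> S \<Longrightarrow> lt s r \<Longrightarrow> lt (s + t) (r + t)"
    using h4 by blast
  show "wf {(s, r). s \<in> S \<and> r \<in> S \<and> lt s r}" using h5 .
qed

lemma sl_irrefl: "monomial_order (S_M M) lt \<Longrightarrow> s \<in> S_M M \<Longrightarrow> \<not> sparse_less M lt s s"
  unfolding sparse_less_def using mo_D(1)[of "S_M M" lt s] by simp

lemma sl_trans: "monomial_order (S_M M) lt \<Longrightarrow> s \<in> S_M M \<Longrightarrow> r \<in> S_M M \<Longrightarrow> t \<in> S_M M \<Longrightarrow>
   sparse_less M lt s r \<Longrightarrow> sparse_less M lt r t \<Longrightarrow> sparse_less M lt s t"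
  unfolding sparse_less_def using mo_D(2)[of "S_M M" lt s r t] by (elim disjE conjE) auto

lemma sl_total: "monomial_order (S_M M) lt \<Longrightarrow> s \<in> S_M M \<Longrightarrow> r \<in> S_M M \<Longrightarrow> s \<noteq> r \<Longrightarrow>
   sparse_less M lt s r \<or> sparse_less M lt r s"
  unfolding sparse_less_def using mo_D(3)[of "S_M M" lt s r] by (cases "aff_deg M s" "aff_deg M r" rule: linorder_cases) auto

lemma max_exists:
  assumes "finite A" "A \<noteq> {}" "A \<subseteq> S"
    and tr: "\<And>s r t. s \<in> S \<Longrightarrow> r \<in> S \<Longrightarrow> t \<in> S \<Longrightarrow> lss s r \<Longrightarrow> lss r t \<Longrightarrow> lss s t"
    and to: "\<And>s r. s \<in> S \<Longrightarrow> r \<in> S \<Longrightarrow> s \<noteq> r \<Longrightarrow> lss s r \<or> lss r s"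
  shows "\<exists>s\<in>A. \<forall>r\<in>A. r \<noteq> s \<longrightarrow> lss r s"
  using assms(1,2,3)
proof (induction A rule: finite_ne_induct)
  case (singleton x) then show ?case by auto
next
  case (insert x F)
  then obtain s where s: "s \<in> F" "\<forall>r\<in>F. r \<noteq> s \<longrightarrow> lss r s" by auto
  have xs: "x \<noteq> s" using s insert by auto
  show ?case
  proof (cases "lss x s")
    case True then show ?thesis using s by auto
  next
    case False
    then have "lss s x" using to[of x s] xs insert s by auto
    have "\<forall>r\<in>insert x F. r \<noteq> x \<longrightarrow> lss r x"
    proof (intro ballI impI)
      fix r assume r: "r \<in> insert x F" "r \<noteq> x"
      then have rF: "r \<in> F" by simp
      show "lss r x"
      proof (cases "r = s")
        case True then show ?thesis using \<open>lss s x\<close> by simp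
      next
        case False
        then have "lss r s" using s rF by blast
        moreover have "r \<in> S" "s \<in> S" "x \<in> S" using rF s insert.prems by auto
        ultimately show ?thesis using tr[of r s x] \<open>lss s x\<close> by blast
      qed
    qed
    then show ?thesis by blast
  qed
qed

lemma LM_props:
  assumes mo: "monomial_order (S_M M) lt" and p: "p \<in> semialg (S_M M)" "p \<noteq> 0"
  shows "LM M lt p \<in> Poly_Mapping.keys p \<and>
     (\<forall>r\<in>Poly_Mapping.keys p. r \<noteq> LM M lt p \<longrightarrow> sparse_less M lt r (LM M lt p))"
proof -
  have ks: "Poly_Mapping.keys p \<subseteq> S_M M" using p unfolding semialg_def by auto
  obtain s where s: "s \<in> Poly_Mapping.keys p" "\<forall>r\<in>Poly_Mapping.keys p. r \<noteq> s \<longrightarrow> sparse_less M lt r s"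
  proof -
    have "\<exists>s\<in>Poly_Mapping.keys p. \<forall>r\<in>Poly_Mapping.keys p. r \<noteq> s \<longrightarrow> sparse_less M lt r s"
      apply (rule max_exists[of "Poly_Mapping.keys p" "S_M M" "sparse_less M lt"])
      using ks p(2) apply auto[3]
      using sl_trans[OF mo] apply blast
      using sl_total[OF mo] apply blast
      done
    then show ?thesis using that by blast
  qed
  have "LM M lt p = s" unfolding LM_def
  proof (rule the_equality)
    show "s \<in> Poly_Mapping.keys p \<and> (\<forall>r\<in>Poly_Mapping.keys p. r \<noteq> s \<longrightarrow> sparse_less M lt r s)"
      using s by blast
  next
    fix s' assume s': "s' \<in> Poly_Mapping.keys p \<and> (\<forall>r\<in>Poly_Mapping.keys p. r \<noteq> s' \<longrightarrow> sparse_less M lt r s')"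
    show "s' = s"
    proof (rule ccontr)
      assume "s' \<noteq> s"
      then have "sparse_less M lt s' s" "sparse_less M lt s s'" using s s' by auto
      then show False using sl_trans[OF mo, of s s' s] sl_irrefl[OF mo, of s] s s' ks by auto
    qed
  qed
  then show ?thesis using s by simp
qed


lemma lookup_single_mult:
  fixes g :: "'a::ab_group_add \<Rightarrow>\<^sub>0 'b::comm_semiring_1"
  shows "Poly_Mapping.lookup (Poly_Mapping.single t c * g) (t + s) = c * Poly_Mapping.lookup g s"
proof -
  have "Poly_Mapping.lookup (Poly_Mapping.single t c * g) (t + s) =
     (\<Sum>l. (c when t = l) * (\<Sum>q. Poly_Mapping.lookup g q when t + s = l + q))"
    by (simp add: lookup_mult lookup_single)
  also have "\<dots> = c * (\<Sum>q. Poly_Mapping.lookup g q when t + s = t + q)"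
    by (simp add: when_mult)
  also have "\<dots> = c * Poly_Mapping.lookup g s"
    by simp
  finally show ?thesis .
qed

lemma semialg_single: "t \<in> S \<Longrightarrow> Poly_Mapping.single t c \<in> semialg S"
  unfolding semialg_def by auto

lemma semialg_diff: "p \<in> semialg S \<Longrightarrow> q \<in> semialg S \<Longrightarrow> p - q \<in> semialg S"
  using keys_diff[of p q] unfolding semialg_def by blast

lemma neg_as_mult:
  fixes q :: "'a::ab_group_add \<Rightarrow>\<^sub>0 'b::comm_ring_1"
  shows "Poly_Mapping.single 0 (-1) * q = - q"
proof (rule poly_mapping_eqI)
  fix k
  show "Poly_Mapping.lookup (Poly_Mapping.single 0 (-1) * q) k = Poly_Mapping.lookup (- q) k"
    using lookup_single_mult[of 0 "-1::'b" q k] by simp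
qed

lemma ideal_mult: "is_ideal S I \<Longrightarrow> p \<in> I \<Longrightarrow> h \<in> semialg S \<Longrightarrow> h * p \<in> I"
  unfolding is_ideal_def by blast

lemma ideal_add: "is_ideal S I \<Longrightarrow> p \<in> I \<Longrightarrow> q \<in> I \<Longrightarrow> p + q \<in> I"
  unfolding is_ideal_def by blast

lemma ideal_diff:
  assumes "is_ideal S I" "(0::'a::ab_group_add) \<in> S" "p \<in> I" "q \<in> I"
  shows "p - q \<in> (I :: ('a \<Rightarrow>\<^sub>0 'b::comm_ring_1) set)"
proof -
  have "Poly_Mapping.single 0 (-1) * q \<in> I"
    using ideal_mult[OF assms(1) assms(4) semialg_single[OF assms(2)]] .
  then have "- q \<in> I" by (simp add: neg_as_mult)
  then have "p + - q \<in> I" using ideal_add[OF assms(1) assms(3)] by blast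
  then show ?thesis by simp
qed

lemma sl_shift:
  assumes mo: "monomial_order (S_M M) lt" and S: "t \<in> S_M M" "b \<in> S_M M" "a \<in> S_M M"
    and sl: "sparse_less M lt b a" and eq: "aff_deg M (t + a) = aff_deg M t + aff_deg M a"
  shows "sparse_less M lt (t + b) (t + a)"
proof -
  have le: "aff_deg M (t + b) \<le> aff_deg M t + aff_deg M b" using aff_deg_add[OF S(1,2)] .
  show ?thesis
  proof (cases "aff_deg M b < aff_deg M a")
    case True
    then show ?thesis using le eq unfolding sparse_less_def by simp
  next
    case False
    then have ab: "aff_deg M b = aff_deg M a" "lt b a" using sl unfolding sparse_less_def by auto
    have "lt (b + t) (a + t)" using mo_D(4)[OF mo S(2) S(3) S(1) ab(2)] .
    then have "lt (t + b) (t + a)" by (simp add: add.commute)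
    then show ?thesis using le eq ab(1) unfolding sparse_less_def by auto
  qed
qed


lemma step_props:
  fixes p :: "int^'n \<Rightarrow>\<^sub>0 'k::field"
  assumes mo: "monomial_order (S_M M) lt" and G: "G \<subseteq> semialg (S_M M) - {0}"
    and p: "p \<in> semialg (S_M M)" and st: "div_step M lt G (p, r) (p', r')"
  shows "p \<noteq> 0 \<and> p' \<in> semialg (S_M M) \<and>
    (\<forall>k \<in> Poly_Mapping.keys p'. sparse_less M lt k (LM M lt p))"
  using st
proof cases
  case (reduce g)
  define t where "t = LM M lt p - LM M lt g"
  define c where "c = LC M lt p / LC M lt g"
  define q where "q = Poly_Mapping.single t c * g"
  have p': "p' = p - q" using reduce(1) unfolding q_def t_def c_def by simp
  have g: "g \<in> semialg (S_M M)" "g \<noteq> 0" using G reduce(4) by auto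
  note LMp = LM_props[OF mo p reduce(3)]
  note LMg = LM_props[OF mo g]
  have gS: "Poly_Mapping.keys g \<subseteq> S_M M" using g unfolding semialg_def by auto
  have pS: "Poly_Mapping.keys p \<subseteq> S_M M" using p unfolding semialg_def by auto
  have LMgS: "LM M lt g \<in> S_M M" using LMg gS by blast
  note dd = dvd_delta_D[OF reduce(5)]
  have tS: "t \<in> S_M M" using dd unfolding t_def by simp
  have LMpe: "LM M lt p = t + LM M lt g" unfolding t_def by simp
  have degeq: "aff_deg M (t + LM M lt g) = aff_deg M t + aff_deg M (LM M lt g)"
    using dd unfolding t_def by simp
  have qk: "k \<in> S_M M \<and> (k = LM M lt p \<or> sparse_less M lt k (LM M lt p))"
    if k: "k \<in> Poly_Mapping.keys q" for k
  proof -
    have "k \<in> {a + b | a b. a \<in> Poly_Mapping.keys (Poly_Mapping.single t c) \<and> b \<in> Poly_Mapping.keys g}"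
      using keys_mult[of "Poly_Mapping.single t c" g] k unfolding q_def by blast
    then obtain b where b: "b \<in> Poly_Mapping.keys g" "k = t + b"
      by (auto split: if_splits)
    have bS: "b \<in> S_M M" using b gS by auto
    have kS: "k \<in> S_M M" using S_M_add[OF tS bS] b by simp
    show ?thesis
    proof (cases "b = LM M lt g")
      case True then show ?thesis using kS b LMpe by simp
    next
      case False
      then have "sparse_less M lt b (LM M lt g)" using LMg b by blast
      then have "sparse_less M lt (t + b) (t + LM M lt g)"
        using sl_shift[OF mo tS bS LMgS _ degeq] by blast
      then show ?thesis using kS b LMpe by simp
    qed
  qed
  have LCg: "LC M lt g \<noteq> 0" using LMg unfolding LC_def by (simp add: in_keys_iff)
  have "Poly_Mapping.lookup q (LM M lt p) = c * LC M lt g"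
    unfolding q_def LMpe LC_def by (rule lookup_single_mult)
  then have lq: "Poly_Mapping.lookup q (LM M lt p) = LC M lt p" using LCg unfolding c_def by simp
  have "Poly_Mapping.lookup p' (LM M lt p) = 0" unfolding p' lookup_minus lq LC_def by simp
  then have nk: "LM M lt p \<notin> Poly_Mapping.keys p'" by (simp add: in_keys_iff)
  have qsem: "q \<in> semialg (S_M M)" using qk unfolding semialg_def by blast
  have p'sem: "p' \<in> semialg (S_M M)" unfolding p' using semialg_diff[OF p qsem] .
  have "\<forall>k \<in> Poly_Mapping.keys p'. sparse_less M lt k (LM M lt p)"
  proof
    fix k assume k: "k \<in> Poly_Mapping.keys p'"
    then have "k \<noteq> LM M lt p" using nk by blast
    moreover have "k \<in> Poly_Mapping.keys p \<or> k \<in> Poly_Mapping.keys q"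
      using k keys_diff[of p q] unfolding p' by blast
    ultimately show "sparse_less M lt k (LM M lt p)" using LMp qk by blast
  qed
  then show ?thesis using reduce(3) p'sem by blast
next
  case move
  note LMp = LM_props[OF mo p move(3)]
  have p': "p' = p - Poly_Mapping.single (LM M lt p) (LC M lt p)" using move(1) by simp
  have "Poly_Mapping.lookup p' (LM M lt p) = 0" unfolding p' lookup_minus LC_def by simp
  then have nk: "LM M lt p \<notin> Poly_Mapping.keys p'" by (simp add: in_keys_iff)
  have pS: "Poly_Mapping.keys p \<subseteq> S_M M" using p unfolding semialg_def by auto
  have ssem: "Poly_Mapping.single (LM M lt p) (LC M lt p) \<in> semialg (S_M M)"
  proof -
    have "LM M lt p \<in> S_M M" using LMp pS by blast
    then show ?thesis by (rule semialg_single)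
  qed
  have p'sem: "p' \<in> semialg (S_M M)" unfolding p' using semialg_diff[OF p ssem] .
  have "\<forall>k \<in> Poly_Mapping.keys p'. sparse_less M lt k (LM M lt p)"
  proof
    fix k assume k: "k \<in> Poly_Mapping.keys p'"
    then have "k \<noteq> LM M lt p" using nk by blast
    moreover have "k \<in> Poly_Mapping.keys p \<or> k \<in> Poly_Mapping.keys (Poly_Mapping.single (LM M lt p) (LC M lt p))"
      using k keys_diff[of p] unfolding p' by blast
    moreover have "Poly_Mapping.keys (Poly_Mapping.single (LM M lt p) (LC M lt p)) \<subseteq> {LM M lt p}"
      by simp
    ultimately have "k \<in> Poly_Mapping.keys p" "k \<noteq> LM M lt p" by blast+
    then show "sparse_less M lt k (LM M lt p)" using LMp by blast
  qed
  then show ?thesis using move(3) p'sem by blast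
qed



lemma wf_sl:
  assumes mo: "monomial_order (S_M M) lt"
  shows "wf {(x, y). x \<in> S_M M \<and> y \<in> S_M M \<and> sparse_less M lt x y}"
proof -
  have w: "wf (inv_image (less_than <*lex*> {(s, r). s \<in> S_M M \<and> r \<in> S_M M \<and> lt s r})
            (\<lambda>s. (aff_deg M s, s)))"
    by (intro wf_inv_image wf_lex_prod wf_less_than mo_D(5)[OF mo])
  show ?thesis
    by (rule wf_subset[OF w]) (auto simp: sparse_less_def)
qed

lemma div_terminates:
  fixes f :: "int^'n \<Rightarrow>\<^sub>0 'k::field"
  assumes mo: "monomial_order (S_M M) lt" and G: "G \<subseteq> semialg (S_M M) - {0}"
    and f: "f \<in> semialg (S_M M)"
  shows "\<not> (\<exists>st. st 0 = (f, 0) \<and> (\<forall>i. div_step M lt G (st i) (st (Suc i))))"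
proof
  assume "\<exists>st. st 0 = (f, 0) \<and> (\<forall>i. div_step M lt G (st i) (st (Suc i)))"
  then obtain st where st0: "st 0 = (f, 0)" and st: "\<And>i. div_step M lt G (st i) (st (Suc i))"
    by blast
  have stp: "\<And>i. div_step M lt G (fst (st i), snd (st i)) (fst (st (Suc i)), snd (st (Suc i)))"
    using st by simp
  have sem: "fst (st i) \<in> semialg (S_M M)" for i
  proof (induction i)
    case 0 then show ?case using st0 f by simp
  next
    case (Suc i) then show ?case using step_props[OF mo G Suc stp[of i]] by blast
  qed
  define R where "R = {(x, y). x \<in> S_M M \<and> y \<in> S_M M \<and> sparse_less M lt x y}"
  have dec: "(mset_set (Poly_Mapping.keys (fst (st (Suc i)))), mset_set (Poly_Mapping.keys (fst (st i)))) \<in> mult R"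
    for i
  proof -
    note sp = step_props[OF mo G sem[of i] stp[of i]]
    note LMp = LM_props[OF mo sem[of i] sp[THEN conjunct1]]
    have J: "mset_set (Poly_Mapping.keys (fst (st i))) \<noteq> {#}"
      using sp by (simp add: mset_set_empty_iff)
    have S1: "Poly_Mapping.keys (fst (st (Suc i))) \<subseteq> S_M M" using sp unfolding semialg_def by blast
    have S2: "Poly_Mapping.keys (fst (st i)) \<subseteq> S_M M" using sem[of i] unfolding semialg_def by blast
    have "\<forall>k \<in> set_mset (mset_set (Poly_Mapping.keys (fst (st (Suc i))))).
            \<exists>j \<in> set_mset (mset_set (Poly_Mapping.keys (fst (st i)))). (k, j) \<in> R"
    proof
      fix k assume "k \<in> set_mset (mset_set (Poly_Mapping.keys (fst (st (Suc i)))))"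
      then have k: "k \<in> Poly_Mapping.keys (fst (st (Suc i)))" by simp
      have "(k, LM M lt (fst (st i))) \<in> R" unfolding R_def using k sp S1 S2 LMp by blast
      then show "\<exists>j \<in> set_mset (mset_set (Poly_Mapping.keys (fst (st i)))). (k, j) \<in> R"
        using LMp by auto
    qed
    from one_step_implies_mult[OF J this, of "{#}"] show ?thesis by simp
  qed
  have "wf (mult R)" unfolding R_def by (rule wf_mult[OF wf_sl[OF mo]])
  then have nch: "\<nexists>h. \<forall>i. (h (Suc i), h i) \<in> mult R" by (simp add: wf_iff_no_infinite_down_chain)
  define H where "H = (\<lambda>i. mset_set (Poly_Mapping.keys (fst (st i))))"
  have "\<forall>i. (H (Suc i), H i) \<in> mult R"
    unfolding H_def using dec by simp
  with nch show False by blast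
qed

lemma invariant:
  fixes f :: "int^'n \<Rightarrow>\<^sub>0 'k::field"
  assumes mo: "monomial_order (S_M M) lt" and G: "G \<subseteq> semialg (S_M M) - {0}"
    and I: "is_ideal (S_M M) I" and GI: "G \<subseteq> I"
    and f: "f \<in> semialg (S_M M)"
    and rt: "(div_step M lt G)\<^sup>*\<^sup>* (f, 0) (p, r)"
  shows "p \<in> semialg (S_M M) \<and> f - (p + r) \<in> I \<and>
    (\<forall>k\<in>Poly_Mapping.keys r. \<not> (\<exists>g\<in>G. dvd_delta M (LM M lt g) k))"
  using rt
proof (induction rule: rtranclp_induct2)
  case refl
  have "(0 :: int^'n \<Rightarrow>\<^sub>0 'k) \<in> I" using I unfolding is_ideal_def by blast
  then show ?case using f by simp
next
  case (step p r p' r')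
  then have IH: "p \<in> semialg (S_M M)" "f - (p + r) \<in> I"
    "\<forall>k\<in>Poly_Mapping.keys r. \<not> (\<exists>g\<in>G. dvd_delta M (LM M lt g) k)" by blast+
  have p'sem: "p' \<in> semialg (S_M M)" using step_props[OF mo G IH(1) step(2)] by blast
  from step(2) show ?case
  proof cases
    case (reduce g)
    define q where "q = Poly_Mapping.single (LM M lt p - LM M lt g) (LC M lt p / LC M lt g) * g"
    have tS: "LM M lt p - LM M lt g \<in> S_M M" using dvd_delta_D[OF reduce(5)] by blast
    have "q \<in> I" unfolding q_def
      using ideal_mult[OF I _ semialg_single[OF tS]] GI reduce(4) by blast
    then have "(f - (p + r)) + q \<in> I" using ideal_add[OF I IH(2)] by blast
    moreover have eq: "f - (p' + r') = (f - (p + r)) + q"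
      using reduce(1,2) unfolding q_def by (simp add: algebra_simps)
    ultimately have "f - (p' + r') \<in> I" by (subst eq)
    then show ?thesis using p'sem IH(3) reduce(2) by simp
  next
    case move
    have eq: "f - (p' + r') = f - (p + r)" using move(1,2) by (simp add: algebra_simps)
    have ks: "Poly_Mapping.keys r' \<subseteq> Poly_Mapping.keys r \<union> {LM M lt p}"
      using move(2) keys_add[of r "Poly_Mapping.single (LM M lt p) (LC M lt p)"] by (auto split: if_splits)
    have "f - (p' + r') \<in> I" unfolding eq by (rule IH(2))
    moreover have "\<forall>k\<in>Poly_Mapping.keys r'. \<not> (\<exists>g\<in>G. dvd_delta M (LM M lt g) k)"
      using ks IH(3) move(4) by blast
    ultimately show ?thesis using p'sem by blast
  qed
qed



theorem mainTheorem1: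
  fixes M :: "(real^'n) set" and lt :: "int^'n \<Rightarrow> int^'n \<Rightarrow> bool"
  assumes "polytope M" and "0 \<in> M"
    and "pointed (S_M M)" and "pointed (S_Mh M)"
    and "monomial_order (S_M M) lt"
  shows "(\<forall>(f :: int^'n \<Rightarrow>\<^sub>0 'k::field_char_0) G. f \<in> semialg (S_M M) \<longrightarrow>
            G \<subseteq> semialg (S_M M) - {0} \<longrightarrow>
            \<not> (\<exists>st. st 0 = (f, 0) \<and> (\<forall>i. div_step M lt G (st i) (st (Suc i)))))
       \<and> (\<forall>(I :: (int^'n \<Rightarrow>\<^sub>0 'k) set) G G' f f' r r'.
            is_ideal (S_M M) I \<longrightarrow>
            G \<subseteq> semialg (S_M M) - {0} \<longrightarrow> G' \<subseteq> semialg (S_M M) - {0} \<longrightarrow>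
            sparse_GB M lt G I \<longrightarrow> sparse_GB M lt G' I \<longrightarrow>
            f \<in> semialg (S_M M) \<longrightarrow> f' \<in> semialg (S_M M) \<longrightarrow> f - f' \<in> I \<longrightarrow>
            div_remainder M lt G f r \<longrightarrow> div_remainder M lt G' f' r' \<longrightarrow> r = r')"
proof (intro conjI allI impI)
  fix f :: "int^'n \<Rightarrow>\<^sub>0 'k::field_char_0" and G :: "(int^'n \<Rightarrow>\<^sub>0 'k) set"
  assume "f \<in> semialg (S_M M)" "G \<subseteq> semialg (S_M M) - {0}"
  then show "\<not> (\<exists>st. st 0 = (f, 0) \<and> (\<forall>i. div_step M lt G (st i) (st (Suc i))))"
    using div_terminates[OF assms(5)] by blast
next
  fix I :: "(int^'n \<Rightarrow>\<^sub>0 'k) set" and G G' :: "(int^'n \<Rightarrow>\<^sub>0 'k) set" and f f' r r'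
  assume I: "is_ideal (S_M M) I" and G: "G \<subseteq> semialg (S_M M) - {0}"
    and G': "G' \<subseteq> semialg (S_M M) - {0}"
    and GB: "sparse_GB M lt G I" and GB': "sparse_GB M lt G' I"
    and f: "f \<in> semialg (S_M M)" and f': "f' \<in> semialg (S_M M)" and ff: "f - f' \<in> I"
    and r: "div_remainder M lt G f r" and r': "div_remainder M lt G' f' r'"
  note mo = assms(5)
  have GI: "G \<subseteq> I" using GB unfolding sparse_GB_def by (rule conjunct1)
  have GI': "G' \<subseteq> I" using GB' unfolding sparse_GB_def by (rule conjunct1)
  note inv = invariant[OF mo G I GI f r[unfolded div_remainder_def]]
  note inv' = invariant[OF mo G' I GI' f' r'[unfolded div_remainder_def]]
  have fr: "f - r \<in> I" using inv[THEN conjunct2, THEN conjunct1] by simp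
  have fr': "f' - r' \<in> I" using inv'[THEN conjunct2, THEN conjunct1] by simp
  have "(f' - r') - (f - r) \<in> I" using ideal_diff[OF I S_M_zero fr' fr] .
  then have "((f' - r') - (f - r)) + (f - f') \<in> I" using ideal_add[OF I _ ff] by blast
  moreover have eq: "((f' - r') - (f - r)) + (f - f') = r - r'" by (simp add: algebra_simps)
  ultimately have d: "r - r' \<in> I" by (simp only: eq)
  show "r = r'"
  proof (rule ccontr)
    assume ne: "r \<noteq> r'"
    then have d0: "r - r' \<noteq> 0" by simp
    have dsem: "r - r' \<in> semialg (S_M M)" using d I unfolding is_ideal_def by blast
    have LMk: "LM M lt (r - r') \<in> Poly_Mapping.keys (r - r')"
      using LM_props[OF mo dsem d0] by blast
    have nr: "\<forall>k\<in>Poly_Mapping.keys r. \<not> (\<exists>g\<in>G. dvd_delta M (LM M lt g) k)"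
      using inv by (rule conjunct2[THEN conjunct2])
    have nr': "\<forall>k\<in>Poly_Mapping.keys r'. \<not> (\<exists>g\<in>G'. dvd_delta M (LM M lt g) k)"
      using inv' by (rule conjunct2[THEN conjunct2])
    have gb: "\<forall>f\<in>I. f \<noteq> 0 \<longrightarrow> (\<exists>g\<in>G. dvd_delta M (LM M lt g) (LM M lt f))"
      using GB unfolding sparse_GB_def by (rule conjunct2[THEN conjunct2])
    have gb': "\<forall>f\<in>I. f \<noteq> 0 \<longrightarrow> (\<exists>g\<in>G'. dvd_delta M (LM M lt g) (LM M lt f))"
      using GB' unfolding sparse_GB_def by (rule conjunct2[THEN conjunct2])
    have e1: "\<exists>g\<in>G. dvd_delta M (LM M lt g) (LM M lt (r - r'))" using gb d d0 by blast
    have e2: "\<exists>g\<in>G'. dvd_delta M (LM M lt g) (LM M lt (r - r'))" using gb' d d0 by blast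
    have "LM M lt (r - r') \<in> Poly_Mapping.keys r \<union> Poly_Mapping.keys r'"
      using keys_diff[of r r'] LMk by blast
    then show False
    proof
      assume "LM M lt (r - r') \<in> Poly_Mapping.keys r"
      then show False using nr e1 by blast
    next
      assume "LM M lt (r - r') \<in> Poly_Mapping.keys r'"
      then show False using nr' e2 by blast
    qed
  qed
qed

end
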